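(* Let $\Sigma$ be a rotational $V$-translator in $\mathrm{SL}(2,\mathbb R)$, $V=x\partial_x+y\partial_y$, whose generating curve $\alpha(s)=(x(s),y(s))$ satisfies $x'=2y\cos\varphi$, $y'=2y\sin\varphi$. (1) If $\varphi$ is constant, then $\varphi\equiv\pi/2$ and $\Sigma$ is the rotational surface with generating curve $\alpha(s)=(0,ce^{2s})$, $c>0$ (the straight line $x=0$). (2) If $\Sigma$ has constant mean curvature $H$, then $H=0$ and $\Sigma$ is the surface of item (1).
   Context: $\mathrm{SL}(2,\mathbb R)$ is given global coordinates $(x,y,\theta)\in\mathbb R\times(0,\infty)\times\mathbb R$ via $(x,y,\theta)\mapsto \begin{pmatrix}1&x\\0&1\end{pmatrix}\begin{pmatrix}\sqrt y&0\\0&1/\sqrt y\end{pmatrix}\begin{pmatrix}\cos\theta&\sin\theta\\-\sin\theta&\cos\theta\end{pmatrix}$, with the metric $\langle\,,\rangle=\frac{dx^2+dy^2}{4y^2}+\left(d\theta+\frac{dx}{2y}\right)^2$. Orthonormal frame: $e_1=2y\partial_x-\partial_\theta$, $e_2=2y\partial_y$, $e_3=\partial_\theta$; $V=\frac{1}{2y}(xe_1+ye_2+xe_3)$. A surface with unit normal $N$ and mean curvature $H$ (average of principal curvatures w.r.t. $N$) is a $V$-translator if $H=\langle N,V\rangle$. Rotational surfaces are those parametrized as $(s,t)\mapsto(x(s),y(s),t)$; when $x'=2y\cos\varphi$, $y'=2y\sin\varphi$, one has $N=-\sin\varphi\,e_1+\cos\varphi\,e_2$ and $H=\frac{\varphi'}{2}+\cos\varphi$.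 *)

theory Defs
  imports "HOL-Analysis.Analysis"
begin

text \<open>Components with respect to the orthonormal frame e1, e2, e3 of SL(2,R).\<close>

definition frame_inner :: "real \<times> real \<times> real \<Rightarrow> real \<times> real \<times> real \<Rightarrow> real" where
  "frame_inner a b = fst a * fst b + fst (snd a) * fst (snd b) + snd (snd a) * snd (snd b)"

definition V_frame :: "real \<Rightarrow> real \<Rightarrow> real \<times> real \<times> real" where
  "V_frame x y = (x / (2*y), y / (2*y), x / (2*y))"

definition N_rot :: "real \<Rightarrow> real \<times> real \<times> real" where
  "N_rot phi = (- sin phi, cos phi, 0)"

definition H_rot :: "real \<Rightarrow> real \<Rightarrow> real" where
  "H_rot phi phi' = phi' / 2 + cos phi"

definition rot_generating_curve ::
  "real set \<Rightarrow> (real \<Rightarrow> real) \<Rightarrow> (real \<Rightarrow> real) \<Rightarrow> (real \<Rightarrow> real) \<Rightarrow> (real \<Rightarrow> real) \<Rightarrow> bool" where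
  "rot_generating_curve I x y phi phi' \<longleftrightarrow>
     open I \<and> is_interval I \<and> I \<noteq> {} \<and>
     (\<forall>s\<in>I. y s > 0 \<and>
        (x has_real_derivative 2 * y s * cos (phi s)) (at s) \<and>
        (y has_real_derivative 2 * y s * sin (phi s)) (at s) \<and>
        (phi has_real_derivative phi' s) (at s))"

definition V_translator_rot ::
  "real set \<Rightarrow> (real \<Rightarrow> real) \<Rightarrow> (real \<Rightarrow> real) \<Rightarrow> (real \<Rightarrow> real) \<Rightarrow> (real \<Rightarrow> real) \<Rightarrow> bool" where
  "V_translator_rot I x y phi phi' \<longleftrightarrow>
     (\<forall>s\<in>I. H_rot (phi s) (phi' s) = frame_inner (N_rot (phi s)) (V_frame (x s) (y s)))"

text \<open>The surface of item (1): generating curve (0, c e^{2s}), c>0, phi = pi/2 (mod 2 pi);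
  or the same curve with reversed parameter (phi = -pi/2 mod 2 pi, y = c e^{-2s}).\<close>
definition is_item1_surface ::
  "real set \<Rightarrow> (real \<Rightarrow> real) \<Rightarrow> (real \<Rightarrow> real) \<Rightarrow> (real \<Rightarrow> real) \<Rightarrow> bool" where
  "is_item1_surface I x y phi =
     (((\<exists>k::int. \<forall>s\<in>I. phi s = pi/2 + 2 * of_int k * pi) \<and>
        (\<exists>c>0. \<forall>s\<in>I. x s = 0 \<and> y s = c * exp (2 * s)))
    \<or> ((\<exists>k::int. \<forall>s\<in>I. phi s = - pi/2 + 2 * of_int k * pi) \<and>
        (\<exists>c>0. \<forall>s\<in>I. x s = 0 \<and> y s = c * exp (- 2 * s))))"

end

theory Submission
  imports Defs
begin

lemma L1:
  assumes "open I" "s \<in> I" "\<forall>t\<in>I. f t = (C::real)" "(f has_real_derivative D) (at s)"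
  shows "D = 0"
proof -
  have "((\<lambda>_. C) has_real_derivative 0) (at s)" by simp
  then have "(f has_real_derivative 0) (at s)"
    by (rule has_field_derivative_transform_within_open[where S=I]) (use assms in auto)
  then show ?thesis using assms(4) DERIV_unique by blast
qed

lemma L2:
  assumes "open I" "is_interval I" "\<forall>t\<in>I. ((f::real\<Rightarrow>real) has_real_derivative 0) (at t)"
  shows "\<exists>c. \<forall>t\<in>I. f t = c"
proof -
  have "connected I" using assms(2) is_interval_connected by blast
  moreover have "continuous_on I f"
    using assms(3) by (meson DERIV_isCont continuous_at_imp_continuous_on)
  ultimately obtain c where "\<And>x. x \<in> I \<Longrightarrow> f x = c"
    using DERIV_zero_connected_constant[of I "{}" f] assms by auto
  then show ?thesis by blast
qed

lemma transl:
  assumes "rot_generating_curve I x y phi phi'" "V_translator_rot I x y phi phi'" "s \<in> I"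
  shows "phi' s = - (x s / y s) * sin (phi s) - cos (phi s)"
proof -
  have "y s > 0" using assms unfolding rot_generating_curve_def by auto
  moreover have "phi' s / 2 + cos (phi s) = - sin (phi s) * (x s / (2 * y s)) + cos (phi s) * (y s / (2 * y s))"
    using assms unfolding V_translator_rot_def H_rot_def frame_inner_def N_rot_def V_frame_def by auto
  ultimately show ?thesis by (simp add: field_simps)
qed


lemma part1:
  assumes curve: "rot_generating_curve I x y phi phi'"
    and translator: "V_translator_rot I x y phi phi'"
    and const: "\<forall>s\<in>I. \<forall>t\<in>I. phi s = phi t"
  shows "is_item1_surface I x y phi"
proof -
  have opI: "open I" and ivI: "is_interval I" and neI: "I \<noteq> {}"
    using curve unfolding rot_generating_curve_def by auto
  have D: "\<And>s. s \<in> I \<Longrightarrow> y s > 0 \<and>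
        (x has_real_derivative 2 * y s * cos (phi s)) (at s) \<and>
        (y has_real_derivative 2 * y s * sin (phi s)) (at s) \<and>
        (phi has_real_derivative phi' s) (at s)"
    using curve unfolding rot_generating_curve_def by auto
  obtain s0 where s0: "s0 \<in> I" using neI by auto
  define p where "p = phi s0"
  have phip: "\<And>s. s \<in> I \<Longrightarrow> phi s = p" unfolding p_def using const s0 by blast
  have phi'0: "phi' s = 0" if s: "s \<in> I" for s
  proof (rule L1[OF opI s])
    show "\<forall>t\<in>I. phi t = p" using phip by blast
    show "(phi has_real_derivative phi' s) (at s)" using D[OF s] by blast
  qed
  have rel: "\<And>s. s \<in> I \<Longrightarrow> x s * sin p + y s * cos p = 0"
  proof -
    fix s assume "s \<in> I"
    have "phi' s = - (x s / y s) * sin (phi s) - cos (phi s)"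
      using transl[OF curve translator \<open>s \<in> I\<close>] .
    then have "0 = - (x s / y s) * sin p - cos p" using phi'0 phip \<open>s \<in> I\<close> by simp
    then show "x s * sin p + y s * cos p = 0" using D[OF \<open>s \<in> I\<close>] by (simp add: field_simps)
  qed
  have "((\<lambda>s. x s * sin p + y s * cos p) has_real_derivative
      2 * y s0 * cos p * sin p + 2 * y s0 * sin p * cos p) (at s0)"
    using D[OF s0] phip[OF s0] by (auto intro!: derivative_eq_intros)
  then have "2 * y s0 * cos p * sin p + 2 * y s0 * sin p * cos p = 0"
    by (rule L1[OF opI s0, rotated]) (use rel in blast)
  then have sc: "sin p * cos p = 0" using D[OF s0] by (simp add: algebra_simps)
  have cp: "cos p = 0"
  proof (rule ccontr)
    assume "cos p \<noteq> 0"
    then have "sin p = 0" using sc by simp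
    then have "y s0 * cos p = 0" using rel[OF s0] by simp
    then show False using D[OF s0] \<open>cos p \<noteq> 0\<close> by simp
  qed
  then have "sin p ^ 2 = 1" using sin_cos_squared_add[of p] by simp
  then have spm: "sin p = 1 \<or> sin p = -1" by (simp add: power2_eq_1_iff)
  have x0: "\<forall>s\<in>I. x s = 0"
    using rel cp spm by auto
  from spm show ?thesis
  proof
    assume sp: "sin p = 1"
    then obtain n :: int where n: "p = (2 * of_int n + 1/2) * pi" using sin_eq_1 sp by blast
    have "\<forall>t\<in>I. ((\<lambda>s. y s * exp (- 2 * s)) has_real_derivative 0) (at t)"
    proof
      fix t assume t: "t \<in> I"
      have "((\<lambda>s. y s * exp (- 2 * s)) has_real_derivative
            2 * y t * sin p * exp (- 2 * t) + y t * (exp (- 2 * t) * (- 2))) (at t)"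
        using D[OF t] phip[OF t] by (auto intro!: derivative_eq_intros)
      then show "((\<lambda>s. y s * exp (- 2 * s)) has_real_derivative 0) (at t)"
        using sp by simp
    qed
    then obtain c where c: "\<forall>t\<in>I. y t * exp (- 2 * t) = c" using L2[OF opI ivI] by blast
    have cpos: "c > 0" proof -
      have "y s0 > 0" using D[OF s0] by blast
      then have "y s0 * exp (- 2 * s0) > 0" by simp
      then show ?thesis using c s0 by auto
    qed
    have "\<forall>s\<in>I. y s = c * exp (2 * s)"
    proof
      fix s assume "s \<in> I"
      then have "y s * exp (- 2 * s) = c" using c by auto
      then have "y s * exp (- 2 * s) * exp (2 * s) = c * exp (2 * s)" by simp
      then show "y s = c * exp (2 * s)" by (simp add: mult.assoc flip: exp_add)
    qed
    moreover have "\<forall>s\<in>I. phi s = pi/2 + 2 * of_int n * pi" using phip n by (simp add: algebra_simps)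
    ultimately show ?thesis unfolding is_item1_surface_def using x0 cpos by blast
  next
    assume sp: "sin p = -1"
    then obtain n :: int where n: "p = (2 * of_int n + 3/2) * pi" using sin_eq_minus1 sp by blast
    have "\<forall>t\<in>I. ((\<lambda>s. y s * exp (2 * s)) has_real_derivative 0) (at t)"
    proof
      fix t assume t: "t \<in> I"
      have "((\<lambda>s. y s * exp (2 * s)) has_real_derivative
            2 * y t * sin p * exp (2 * t) + y t * (exp (2 * t) * 2)) (at t)"
        using D[OF t] phip[OF t] by (auto intro!: derivative_eq_intros)
      then show "((\<lambda>s. y s * exp (2 * s)) has_real_derivative 0) (at t)"
        using sp by simp
    qed
    then obtain c where c: "\<forall>t\<in>I. y t * exp (2 * t) = c" using L2[OF opI ivI] by blast
    have cpos: "c > 0" proof -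
      have "y s0 > 0" using D[OF s0] by blast
      then have "y s0 * exp (2 * s0) > 0" by simp
      then show ?thesis using c s0 by auto
    qed
    have "\<forall>s\<in>I. y s = c * exp (- 2 * s)"
    proof
      fix s assume "s \<in> I"
      then have "y s * exp (2 * s) = c" using c by auto
      then have "y s * exp (2 * s) * exp (- 2 * s) = c * exp (- 2 * s)" by simp
      then show "y s = c * exp (- 2 * s)" by (simp add: mult.assoc flip: exp_add)
    qed
    moreover have "\<forall>s\<in>I. phi s = - pi/2 + 2 * of_int (n + 1) * pi" using phip n by (simp add: algebra_simps)
    ultimately show ?thesis unfolding is_item1_surface_def using x0 cpos by blast
  qed
qed

lemma alg:
  fixes c zz u f H :: real
  assumes "c^2+zz^2=1" "f = -u*zz - c" "2*H = c - u*zz" "-zz*f - 4*H*zz - u*c*f = 0"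
  shows "u*(1-2*H^2) = H*zz*(1+u^2)"
proof -
  have c: "c = 2*H + u*zz" using assms(3) by simp
  have f: "f = -2*u*zz - 2*H" using assms(2) c by simp
  have E1: "(2*H+2*u*zz)*(zz*(1+u^2)+2*H*u) - 4*H*zz = 0" using assms(4) unfolding c f by (simp add: algebra_simps power2_eq_square)
  have e: "zz^2*(1+u^2) + 4*H*u*zz + 4*H^2 - 1 = 0" using assms(1) unfolding c by (simp add: algebra_simps power2_eq_square)
  have "u*(1-2*H^2) - H*zz*(1+u^2) = ((2*H+2*u*zz)*(zz*(1+u^2)+2*H*u) - 4*H*zz - 2*u*(zz^2*(1+u^2) + 4*H*u*zz + 4*H^2 - 1))/2"
    by (simp add: algebra_simps power2_eq_square)
  then show ?thesis using E1 e by simp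
qed
lemma alg2:
  fixes c zz u H :: real
  assumes "c^2+zz^2=1" "2*H = c - u*zz" "u*(1-2*H^2) = H*zz*(1+u^2)"
  shows "(1-H^2)*u^2 + (4*H^2-1)*H^2 = 0"
proof -
  have c: "c = 2*H + u*zz" using assms(2) by simp
  have e: "zz^2*(1+u^2) + 4*H*u*zz + 4*H^2 - 1 = 0" using assms(1) unfolding c by (simp add: algebra_simps power2_eq_square)
  have "H^2*(1+u^2)*(zz^2*(1+u^2) + 4*H*u*zz + 4*H^2 - 1) = (H*zz*(1+u^2))^2 + 4*H^2*u*(H*zz*(1+u^2)) + H^2*(1+u^2)*(4*H^2-1)"
      by (simp add: algebra_simps power2_eq_square)
  also have "\<dots> = (u*(1-2*H^2))^2 + 4*H^2*u*(u*(1-2*H^2)) + H^2*(1+u^2)*(4*H^2-1)" using assms(3) by simp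
  also have "\<dots> = (1-H^2)*u^2 + (4*H^2-1)*H^2" by (simp add: algebra_simps power2_eq_square power4_eq_xxxx)
  finally show ?thesis using e by simp
qed

lemma part2:
  assumes curve: "rot_generating_curve I x y phi phi'"
    and translator: "V_translator_rot I x y phi phi'"
    and Hc: "\<forall>s\<in>I. H_rot (phi s) (phi' s) = H"
  shows "H = 0 \<and> is_item1_surface I x y phi"
proof -
  have opI: "open I" and ivI: "is_interval I" and neI: "I \<noteq> {}"
    using curve unfolding rot_generating_curve_def by auto
  have D: "\<And>s. s \<in> I \<Longrightarrow> y s > 0 \<and>
        (x has_real_derivative 2 * y s * cos (phi s)) (at s) \<and>
        (y has_real_derivative 2 * y s * sin (phi s)) (at s) \<and>
        (phi has_real_derivative phi' s) (at s)"
    using curve unfolding rot_generating_curve_def by auto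
  obtain s0 where s0: "s0 \<in> I" using neI by auto
  define u where "u = (\<lambda>s. x s / y s)"
  have tr: "phi' s = - u s * sin (phi s) - cos (phi s)" if "s \<in> I" for s
    using transl[OF curve translator that] unfolding u_def by simp
  have h2: "2 * H = cos (phi s) - u s * sin (phi s)" if s: "s \<in> I" for s
  proof -
    have "phi' s / 2 + cos (phi s) = H" using Hc s unfolding H_rot_def by blast
    then show ?thesis using tr[OF s] by (simp add: field_simps)
  qed
  have ud: "(u has_real_derivative 4 * H) (at s)" if s: "s \<in> I" for s
  proof -
    have yp: "y s > 0" using D[OF s] by blast
    have "(u has_real_derivative (2 * y s * cos (phi s) * y s - x s * (2 * y s * sin (phi s))) / (y s * y s)) (at s)"
      unfolding u_def using D[OF s] yp by (auto intro!: derivative_eq_intros)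
    moreover have "(2 * y s * cos (phi s) * y s - x s * (2 * y s * sin (phi s))) / (y s * y s)
       = 2 * (cos (phi s) - u s * sin (phi s))"
      unfolding u_def using yp by (simp add: field_simps)
    moreover have "4 * H = 2 * (cos (phi s) - u s * sin (phi s))" using h2[OF s] by simp
    ultimately show ?thesis by metis
  qed
  have A: "u s * (1 - 2 * H^2) = H * sin (phi s) * (1 + (u s)^2)" if s: "s \<in> I" for s
  proof -
    have "((\<lambda>t. cos (phi t) - u t * sin (phi t)) has_real_derivative
       - sin (phi s) * phi' s - (4 * H * sin (phi s) + u s * (cos (phi s) * phi' s))) (at s)"
      using D[OF s] ud[OF s] by (auto intro!: derivative_eq_intros)
    then have "- sin (phi s) * phi' s - (4 * H * sin (phi s) + u s * (cos (phi s) * phi' s)) = 0"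
      by (rule L1[OF opI s, where C="2*H", rotated]) (use h2 in auto)
    then have "- sin (phi s) * phi' s - 4 * H * sin (phi s) - u s * cos (phi s) * phi' s = 0"
      by (simp add: algebra_simps)
    then show ?thesis using alg[of "cos (phi s)" "sin (phi s)" "phi' s" "u s" H] tr[OF s] h2[OF s]
      by simp
  qed
  have Q: "(1 - H^2) * (u s)^2 + (4 * H^2 - 1) * H^2 = 0" if s: "s \<in> I" for s
    using alg2[of "cos (phi s)" "sin (phi s)" H "u s"] h2[OF s] A[OF s] by simp
  have H0: "H = 0"
  proof (rule ccontr)
    assume Hn: "H \<noteq> 0"
    show False
    proof (cases "1 - H^2 = 0")
      case True
      then have "H^2 = 1" by simp
      then show False using Q[OF s0] by simp
    next
      case False
      have usq: "\<forall>t\<in>I. (u t)^2 = - ((4 * H^2 - 1) * H^2) / (1 - H^2)"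
        using Q False by (auto simp: field_simps)
      have u0: "u t = 0" if t: "t \<in> I" for t
      proof -
        have "((\<lambda>t. (u t)^2) has_real_derivative 2 * u t * (4 * H)) (at t)"
          using ud[OF t] by (auto intro!: derivative_eq_intros)
        then have "2 * u t * (4 * H) = 0"
          by (rule L1[OF opI t, rotated]) (use usq in blast)
        then show ?thesis using Hn by simp
      qed
      have "4 * H = 0" by (rule L1[OF opI s0 _ ud[OF s0]]) (use u0 in blast)
      then show False using Hn by simp
    qed
  qed
  have x0: "x s = 0" if s: "s \<in> I" for s
  proof -
    have "u s = 0" using A[OF s] H0 by simp
    then show ?thesis using D[OF s] unfolding u_def by simp
  qed
  have c0: "cos (phi s) = 0" if s: "s \<in> I" for s
  proof -
    have "2 * y s * cos (phi s) = 0"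
      by (rule L1[OF opI s, where f=x]) (use x0 D[OF s] in blast)+
    then show ?thesis using D[OF s] by simp
  qed
  have "\<forall>t\<in>I. (phi has_real_derivative 0) (at t)"
  proof
    fix t assume t: "t \<in> I"
    have "phi' t = 0" using tr[OF t] c0[OF t] x0[OF t] unfolding u_def by simp
    then show "(phi has_real_derivative 0) (at t)" using D[OF t] by metis
  qed
  then obtain c where "\<forall>t\<in>I. phi t = c" using L2[OF opI ivI] by blast
  then have "\<forall>s\<in>I. \<forall>t\<in>I. phi s = phi t" by simp
  then show ?thesis using part1[OF curve translator] H0 by blast
qed

theorem mainTheorem4:
  fixes I :: "real set" and x y phi phi' :: "real \<Rightarrow> real"
  assumes curve: "rot_generating_curve I x y phi phi'"
    and translator: "V_translator_rot I x y phi phi'"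
  shows "((\<forall>s\<in>I. \<forall>t\<in>I. phi s = phi t) \<longrightarrow> is_item1_surface I x y phi)
       \<and> (\<forall>H. (\<forall>s\<in>I. H_rot (phi s) (phi' s) = H) \<longrightarrow> H = 0 \<and> is_item1_surface I x y phi)"
  using part1[OF curve translator] part2[OF curve translator] by blast

end
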